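(* Let $q$ and $\lambda\in(0,\infty)$ be as in the context and let $U_1=(P_1,Q_1,R_1)^T$ be the unique solution of the Appell system with $\lim_{x\to\infty}U_1(x,\lambda)=(\sqrt\lambda,0,1/\sqrt\lambda)^T$. Fix $c>0$ and let $\gamma(x)=\int_c^x\frac{dt}{R_1(t,\lambda)}$. Define \[U_2=\begin{pmatrix}P_1\cos2\gamma+(Q_1/R_1)\sin2\gamma-(2/R_1)\cos2\gamma\\ Q_1\cos2\gamma+2\sin2\gamma\\ R_1\cos2\gamma\end{pmatrix},\quad U_3=\begin{pmatrix}P_1\sin2\gamma-(Q_1/R_1)\cos2\gamma-(2/R_1)\sin2\gamma\\ Q_1\sin2\gamma-2\cos2\gamma\\ R_1\sin2\gamma\end{pmatrix}.\] Then every solution $U$ of the Appell system can be written as $U=\beta_1U_1+\beta_2U_2+\beta_3U_3$ for constants $\beta_1,\beta_2,\beta_3$ (in particular $U_2,U_3$ are solutions).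
   Context: $q(x)=\frac{q_0}{x^2}+\frac{q_1}{x}+\sum_{n\ge0}q_{n+2}x^n$ with real coefficients, the series convergent on $(0,\infty)$, $q_0\ge-\tfrac14$, $q_0,q_1$ not both zero; for some $x_0>0$ either $q\in L_1(x_0,\infty)$, or $q'\in L_1(x_0,\infty)$, $q\in AC_{loc}[x_0,\infty)$ and $q\to0$ at $\infty$. Appell system: $(P,Q,R)'=M(P,Q,R)^T$ with $M=\begin{pmatrix}0&\lambda-q&0\\-2&0&2(\lambda-q)\\0&-1&0\end{pmatrix}$; under these hypotheses $U_1$ exists and is unique, and $R_1(x,\lambda)>0$ for all $x>0$, so $\gamma$ is well defined. *)

theory Defs
  imports "HOL-Analysis.Analysis"
begin

definition abs_cont_on_interval :: "real \<Rightarrow> real \<Rightarrow> (real \<Rightarrow> real) \<Rightarrow> bool" where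
  "abs_cont_on_interval lo hi f \<longleftrightarrow>
     (\<forall>e>0. \<exists>d>0. \<forall>(n::nat) (a::nat \<Rightarrow> real) (b::nat \<Rightarrow> real).
        (\<forall>i<n. lo \<le> a i \<and> a i \<le> b i \<and> b i \<le> hi) \<and>
        (\<forall>i<n. \<forall>j<n. i \<noteq> j \<longrightarrow> b i \<le> a j \<or> b j \<le> a i) \<and>
        (\<Sum>i<n. b i - a i) < d
        \<longrightarrow> (\<Sum>i<n. \<bar>f (b i) - f (a i)\<bar>) < e)"

definition AC_loc_from :: "real \<Rightarrow> (real \<Rightarrow> real) \<Rightarrow> bool" where
  "AC_loc_from x0 f \<longleftrightarrow> (\<forall>hi\<ge>x0. abs_cont_on_interval x0 hi f)"

definition appell_sol :: "(real \<Rightarrow> real) \<Rightarrow> real \<Rightarrow> (real \<Rightarrow> real) \<Rightarrow> (real \<Rightarrow> real) \<Rightarrow> (real \<Rightarrow> real) \<Rightarrow> bool" where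
  "appell_sol q lam P Q R \<longleftrightarrow>
     (\<forall>x>0. (P has_real_derivative ((lam - q x) * Q x)) (at x) \<and>
            (Q has_real_derivative (- 2 * P x + 2 * (lam - q x) * R x)) (at x) \<and>
            (R has_real_derivative (- Q x)) (at x))"

end

theory Submission
  imports Defs
begin

lemma gamma_deriv:
  fixes f :: "real \<Rightarrow> real"
  assumes "c > 0" "x > 0" "\<And>t. t > 0 \<Longrightarrow> isCont f t"
  shows "((\<lambda>u. LBINT t=ereal c..ereal u. f t) has_real_derivative f x) (at x)"
proof -
  define d where "d = min x c / 2"
  define e where "e = max x c + 1"
  have dpos: "d > 0" "d < c" "d < x" "c < e" "x < e" using assms by (auto simp: d_def e_def)
  have "continuous_on {d..e} f"
    by (intro continuous_at_imp_continuous_on ballI assms(3)) (use dpos in auto)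
  then have "((\<lambda>u. LBINT t=ereal c..ereal u. f t) has_vector_derivative f x) (at x within {d..e})"
    by (intro interval_integral_FTC2) (use dpos in linarith)+
  then have "((\<lambda>u. LBINT t=ereal c..ereal u. f t) has_vector_derivative f x) (at x)"
    using at_within_Icc_at[of d x e] dpos by simp
  then show ?thesis by (simp add: has_real_derivative_iff_has_vector_derivative)
qed

lemma const_pos:
  fixes f :: "real \<Rightarrow> real"
  assumes "\<And>x. x > 0 \<Longrightarrow> (f has_real_derivative 0) (at x)"
  shows "\<And>x. x > 0 \<Longrightarrow> f x = f 1"
proof -
  obtain k where "\<forall>x\<in>{0<..}. f x = k"
    using has_field_derivative_zero_constant[of "{0<..}" f]
    by (meson assms convex_real_interval(3) greaterThan_iff has_field_derivative_at_within)
  then show "\<And>x. x > 0 \<Longrightarrow> f x = f 1" by auto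
qed

lemma rot_deriv:
  fixes P Q R g :: "real \<Rightarrow> real" and x m P' Q' R' :: real
  assumes dP: "(P has_real_derivative m * Q x) (at x)"
    and dQ: "(Q has_real_derivative (- 2 * P x + 2 * m * R x)) (at x)"
    and dR: "(R has_real_derivative (- Q x)) (at x)"
    and dg: "(g has_real_derivative 2 / R x) (at x)"
    and R0: "R x \<noteq> 0" and inv: "4 * P x * R x - (Q x)\<^sup>2 = 4"
  shows "((\<lambda>x. P x * cos (g x) + (Q x / R x) * sin (g x) - (2 / R x) * cos (g x)) has_real_derivative
            m * (Q x * cos (g x) + 2 * sin (g x))) (at x)"
    and "((\<lambda>x. Q x * cos (g x) + 2 * sin (g x)) has_real_derivative
            (- 2 * (P x * cos (g x) + (Q x / R x) * sin (g x) - (2 / R x) * cos (g x)) + 2 * m * (R x * cos (g x)))) (at x)"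
    and "((\<lambda>x. R x * cos (g x)) has_real_derivative - (Q x * cos (g x) + 2 * sin (g x))) (at x)"
proof -
  have Qsq: "(Q x)\<^sup>2 = 4 * P x * R x - 4" using inv by simp
  have QQ: "\<And>z. Q x * (Q x * z) = (4 * P x * R x - 4) * z"
    using Qsq by (metis mult.assoc power2_eq_square)
  show "((\<lambda>x. P x * cos (g x) + (Q x / R x) * sin (g x) - (2 / R x) * cos (g x)) has_real_derivative
            m * (Q x * cos (g x) + 2 * sin (g x))) (at x)"
    apply (rule derivative_eq_intros dP dQ dR dg | simp add: R0)+
    using R0 apply (simp add: field_simps)
    apply (simp add: QQ algebra_simps)
    done
  show "((\<lambda>x. Q x * cos (g x) + 2 * sin (g x)) has_real_derivative
            (- 2 * (P x * cos (g x) + (Q x / R x) * sin (g x) - (2 / R x) * cos (g x)) + 2 * m * (R x * cos (g x)))) (at x)"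
    apply (rule derivative_eq_intros dP dQ dR dg | simp add: R0)+
    using R0 apply (simp add: field_simps)
    done
  show "((\<lambda>x. R x * cos (g x)) has_real_derivative - (Q x * cos (g x) + 2 * sin (g x))) (at x)"
    apply (rule derivative_eq_intros dP dQ dR dg | simp add: R0)+
    done
qed
lemma rot_deriv_sin:
  fixes P Q R g :: "real \<Rightarrow> real" and x m P' Q' R' :: real
  assumes dP: "(P has_real_derivative m * Q x) (at x)"
    and dQ: "(Q has_real_derivative (- 2 * P x + 2 * m * R x)) (at x)"
    and dR: "(R has_real_derivative (- Q x)) (at x)"
    and dg: "(g has_real_derivative 2 / R x) (at x)"
    and R0: "R x \<noteq> 0" and inv: "4 * P x * R x - (Q x)\<^sup>2 = 4"
  shows "((\<lambda>x. P x * sin (g x) - (Q x / R x) * cos (g x) - (2 / R x) * sin (g x)) has_real_derivative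
            m * (Q x * sin (g x) - 2 * cos (g x))) (at x)"
    and "((\<lambda>x. Q x * sin (g x) - 2 * cos (g x)) has_real_derivative
            (- 2 * (P x * sin (g x) - (Q x / R x) * cos (g x) - (2 / R x) * sin (g x)) + 2 * m * (R x * sin (g x)))) (at x)"
    and "((\<lambda>x. R x * sin (g x)) has_real_derivative - (Q x * sin (g x) - 2 * cos (g x))) (at x)"
proof -
  have Qsq: "(Q x)\<^sup>2 = 4 * P x * R x - 4" using inv by simp
  have QQ: "\<And>z. Q x * (Q x * z) = (4 * P x * R x - 4) * z"
    using Qsq by (metis mult.assoc power2_eq_square)
  show "((\<lambda>x. P x * sin (g x) - (Q x / R x) * cos (g x) - (2 / R x) * sin (g x)) has_real_derivative
            m * (Q x * sin (g x) - 2 * cos (g x))) (at x)"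
    apply (rule derivative_eq_intros dP dQ dR dg | simp add: R0)+
    using R0 apply (simp add: field_simps)
    apply (simp add: QQ algebra_simps)
    done
  show "((\<lambda>x. Q x * sin (g x) - 2 * cos (g x)) has_real_derivative
            (- 2 * (P x * sin (g x) - (Q x / R x) * cos (g x) - (2 / R x) * sin (g x)) + 2 * m * (R x * sin (g x)))) (at x)"
    apply (rule derivative_eq_intros dP dQ dR dg | simp add: R0)+
    using R0 apply (simp add: field_simps)
    done
  show "((\<lambda>x. R x * sin (g x)) has_real_derivative - (Q x * sin (g x) - 2 * cos (g x))) (at x)"
    apply (rule derivative_eq_intros dP dQ dR dg | simp add: R0)+
    done
qed

lemma rotid: "(C*K + S*M)*(C*a + S*b) + (S*K - C*M)*(S*a - C*b) = (C\<^sup>2+S\<^sup>2)*(K*a + M*(b::real))"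
  by (simp add: algebra_simps power2_eq_square)

lemma decomp:
  fixes p q r p1 q1 r1 C S :: real
  assumes r1: "r1 \<noteq> 0" and inv: "4 * p1 * r1 - q1\<^sup>2 = 4" and cs: "C\<^sup>2 + S\<^sup>2 = 1"
  defines "B \<equiv> \<lambda>a b c a' b' c'. 2 * (a * c' + c * a') - b * b'"
  defines "p2 \<equiv> p1 * C + (q1 / r1) * S - (2 / r1) * C" and "q2 \<equiv> q1 * C + 2 * S" and "r2 \<equiv> r1 * C"
  defines "p3 \<equiv> p1 * S - (q1 / r1) * C - (2 / r1) * S" and "q3 \<equiv> q1 * S - 2 * C" and "r3 \<equiv> r1 * S"
  shows "p = B p q r p1 q1 r1 / 4 * p1 + (- B p q r p2 q2 r2 / 4) * p2 + (- B p q r p3 q3 r3 / 4) * p3"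
    and "q = B p q r p1 q1 r1 / 4 * q1 + (- B p q r p2 q2 r2 / 4) * q2 + (- B p q r p3 q3 r3 / 4) * q3"
    and "r = B p q r p1 q1 r1 / 4 * r1 + (- B p q r p2 q2 r2 / 4) * r2 + (- B p q r p3 q3 r3 / 4) * r3"
proof -
  define k1 where "k1 = B p q r p1 q1 r1"
  define n where "n = 4 * r / r1"
  define m where "m = 2 * r * q1 / r1 - 2 * q"
  have k1e: "k1 = 2 * (p * r1 + r * p1) - q * q1" by (simp add: k1_def B_def)
  have k2: "B p q r p2 q2 r2 = C * (k1 - n) + S * m"
    unfolding B_def k1e n_def m_def p2_def q2_def r2_def using r1 by (simp add: field_simps)
  have k3: "B p q r p3 q3 r3 = S * (k1 - n) - C * m"
    unfolding B_def k1e n_def m_def p3_def q3_def r3_def using r1 by (simp add: field_simps)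
  have p23: "p2 = C * (p1 - 2/r1) + S * (q1/r1)" "p3 = S * (p1 - 2/r1) - C * (q1/r1)"
    by (simp_all add: p2_def p3_def algebra_simps)
  have q23: "q2 = C * q1 + S * 2" "q3 = S * q1 - C * 2"
    by (simp_all add: q2_def q3_def algebra_simps)
  have r23: "r2 = C * r1 + S * 0" "r3 = S * r1 - C * 0"
    by (simp_all add: r2_def r3_def algebra_simps)
  have sp: "B p q r p2 q2 r2 * p2 + B p q r p3 q3 r3 * p3 = (k1 - n) * (p1 - 2/r1) + m * (q1/r1)"
    by (simp only: k2 k3) (simp only: p23 rotid cs, simp)
  have sq: "B p q r p2 q2 r2 * q2 + B p q r p3 q3 r3 * q3 = (k1 - n) * q1 + m * 2"
    by (simp only: k2 k3) (simp only: q23 rotid cs, simp)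
  have sr: "B p q r p2 q2 r2 * r2 + B p q r p3 q3 r3 * r3 = (k1 - n) * r1 + m * 0"
    by (simp only: k2 k3) (simp only: r23 rotid cs, simp)
  have p1e: "q1\<^sup>2 = 4 * p1 * r1 - 4" using inv by simp
  show "p = B p q r p1 q1 r1 / 4 * p1 + (- B p q r p2 q2 r2 / 4) * p2 + (- B p q r p3 q3 r3 / 4) * p3"
  proof -
    have "B p q r p1 q1 r1 / 4 * p1 + (- B p q r p2 q2 r2 / 4) * p2 + (- B p q r p3 q3 r3 / 4) * p3
       = (k1 * p1 - (B p q r p2 q2 r2 * p2 + B p q r p3 q3 r3 * p3)) / 4"
      unfolding k1_def by (simp add: field_simps)
    also have "\<dots> = (k1 * p1 - ((k1 - n) * (p1 - 2/r1) + m * (q1/r1))) / 4"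
      by (simp only: sp)
    also have "\<dots> = p + r * (4 * p1 * r1 - 4 - q1\<^sup>2) / (2 * r1\<^sup>2)"
      unfolding k1e n_def m_def using r1 by (simp add: field_simps power2_eq_square)
    also have "\<dots> = p" using inv by simp
    finally show ?thesis by simp
  qed
  show "q = B p q r p1 q1 r1 / 4 * q1 + (- B p q r p2 q2 r2 / 4) * q2 + (- B p q r p3 q3 r3 / 4) * q3"
  proof -
    have "B p q r p1 q1 r1 / 4 * q1 + (- B p q r p2 q2 r2 / 4) * q2 + (- B p q r p3 q3 r3 / 4) * q3
       = (k1 * q1 - (B p q r p2 q2 r2 * q2 + B p q r p3 q3 r3 * q3)) / 4"
      unfolding k1_def by (simp add: field_simps)
    also have "\<dots> = (k1 * q1 - ((k1 - n) * q1 + m * 2)) / 4"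
      by (simp only: sq)
    also have "\<dots> = q"
      unfolding n_def m_def using r1 by (simp add: field_simps)
    finally show ?thesis by simp
  qed
  show "r = B p q r p1 q1 r1 / 4 * r1 + (- B p q r p2 q2 r2 / 4) * r2 + (- B p q r p3 q3 r3 / 4) * r3"
  proof -
    have "B p q r p1 q1 r1 / 4 * r1 + (- B p q r p2 q2 r2 / 4) * r2 + (- B p q r p3 q3 r3 / 4) * r3
       = (k1 * r1 - (B p q r p2 q2 r2 * r2 + B p q r p3 q3 r3 * r3)) / 4"
      unfolding k1_def by (simp add: field_simps)
    also have "\<dots> = (k1 * r1 - ((k1 - n) * r1 + m * 0)) / 4"
      by (simp only: sr)
    also have "\<dots> = r"
      unfolding n_def using r1 by (simp add: field_simps)
    finally show ?thesis by simp
  qed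
qed

lemma bil_deriv:
  assumes U: "appell_sol q lam P Q R" and V: "appell_sol q lam P' Q' R'" and x: "x > 0"
  shows "((\<lambda>x. 2 * (P x * R' x + R x * P' x) - Q x * Q' x) has_real_derivative 0) (at x)"
proof -
  from U x have dP: "(P has_real_derivative ((lam - q x) * Q x)) (at x)"
    and dQ: "(Q has_real_derivative (- 2 * P x + 2 * (lam - q x) * R x)) (at x)"
    and dR: "(R has_real_derivative (- Q x)) (at x)" by (auto simp: appell_sol_def)
  from V x have dP': "(P' has_real_derivative ((lam - q x) * Q' x)) (at x)"
    and dQ': "(Q' has_real_derivative (- 2 * P' x + 2 * (lam - q x) * R' x)) (at x)"
    and dR': "(R' has_real_derivative (- Q' x)) (at x)" by (auto simp: appell_sol_def)
  show ?thesis
    apply (rule derivative_eq_intros dP dQ dR dP' dQ' dR' | simp)+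
    apply (simp add: algebra_simps)
    done
qed

theorem lemma2:
  fixes q :: "real \<Rightarrow> real" and q0 q1 :: real and a :: "nat \<Rightarrow> real"
    and lam c :: real and P1 Q1 R1 \<gamma> :: "real \<Rightarrow> real"
  assumes conv: "\<forall>x>0. summable (\<lambda>n. a n * x ^ n)"
    and q_def: "\<forall>x>0. q x = q0 / x\<^sup>2 + q1 / x + (\<Sum>n. a n * x ^ n)"
    and q0_ge: "q0 \<ge> - 1 / 4"
    and q01: "q0 \<noteq> 0 \<or> q1 \<noteq> 0"
    and decay: "\<exists>x0>0. set_integrable lborel {x0..} q \<or>
                  (set_integrable lborel {x0..} (deriv q) \<and> AC_loc_from x0 q \<and>
                   (q \<longlongrightarrow> 0) at_top)"
    and lam_pos: "lam > 0"
    and c_pos: "c > 0"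
    and U1_sol: "appell_sol q lam P1 Q1 R1"
    and U1_lim: "(P1 \<longlongrightarrow> sqrt lam) at_top" "(Q1 \<longlongrightarrow> 0) at_top"
                "(R1 \<longlongrightarrow> 1 / sqrt lam) at_top"
  defines "\<gamma> \<equiv> \<lambda>x::real. (LBINT t=ereal c..ereal x. 1 / R1 t)"
    and "P2 \<equiv> \<lambda>x. P1 x * cos (2 * \<gamma> x) + (Q1 x / R1 x) * sin (2 * \<gamma> x) - (2 / R1 x) * cos (2 * \<gamma> x)"
    and "Q2 \<equiv> \<lambda>x. Q1 x * cos (2 * \<gamma> x) + 2 * sin (2 * \<gamma> x)"
    and "R2 \<equiv> \<lambda>x. R1 x * cos (2 * \<gamma> x)"
    and "P3 \<equiv> \<lambda>x. P1 x * sin (2 * \<gamma> x) - (Q1 x / R1 x) * cos (2 * \<gamma> x) - (2 / R1 x) * sin (2 * \<gamma> x)"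
    and "Q3 \<equiv> \<lambda>x. Q1 x * sin (2 * \<gamma> x) - 2 * cos (2 * \<gamma> x)"
    and "R3 \<equiv> \<lambda>x. R1 x * sin (2 * \<gamma> x)"
  shows "appell_sol q lam P2 Q2 R2 \<and> appell_sol q lam P3 Q3 R3 \<and>
         (\<forall>P Q R. appell_sol q lam P Q R \<longrightarrow>
            (\<exists>b1 b2 b3. \<forall>x>0.
               P x = b1 * P1 x + b2 * P2 x + b3 * P3 x \<and>
               Q x = b1 * Q1 x + b2 * Q2 x + b3 * Q3 x \<and>
               R x = b1 * R1 x + b2 * R2 x + b3 * R3 x))"
proof -
  have dd: "\<And>x. x > 0 \<Longrightarrow> (P1 has_real_derivative ((lam - q x) * Q1 x)) (at x) \<and>
            (Q1 has_real_derivative (- 2 * P1 x + 2 * (lam - q x) * R1 x)) (at x) \<and>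
            (R1 has_real_derivative (- Q1 x)) (at x)"
    using U1_sol by (auto simp: appell_sol_def)
  define B1 where "B1 = (\<lambda>x. 2 * (P1 x * R1 x + R1 x * P1 x) - Q1 x * Q1 x)"
  have B1c: "\<And>x. x > 0 \<Longrightarrow> B1 x = B1 1"
    by (rule const_pos) (use bil_deriv[OF U1_sol U1_sol] in \<open>simp add: B1_def\<close>)
  have "(B1 \<longlongrightarrow> 2 * (sqrt lam * (1 / sqrt lam) + 1 / sqrt lam * sqrt lam) - 0 * 0) at_top"
    unfolding B1_def by (intro tendsto_intros U1_lim)
  then have lim: "(B1 \<longlongrightarrow> 4) at_top" using lam_pos by simp
  have ev: "\<forall>\<^sub>F x in at_top. B1 x = B1 1"
    using eventually_gt_at_top[of 0] by eventually_elim (rule B1c)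
  have "((\<lambda>x::real. B1 1) \<longlongrightarrow> 4) at_top" by (rule Lim_transform_eventually[OF lim ev])
  then have "B1 1 = 4" by (simp add: tendsto_const_iff)
  then have B14: "B1 x = 4" if "x > 0" for x using B1c[OF that] by simp
  have inv: "\<And>x. x > 0 \<Longrightarrow> 4 * P1 x * R1 x - (Q1 x)\<^sup>2 = 4"
  proof -
    fix x :: real assume "x > 0"
    from B14[OF this] show "4 * P1 x * R1 x - (Q1 x)\<^sup>2 = 4"
      by (simp add: B1_def power2_eq_square algebra_simps)
  qed
  have R0: "\<And>x. x > 0 \<Longrightarrow> R1 x \<noteq> 0"
  proof
    fix x :: real assume "x > 0" "R1 x = 0"
    with inv[of x] have "- (Q1 x)\<^sup>2 = 4" by simp
    moreover have "(Q1 x)\<^sup>2 \<ge> 0" by simp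
    ultimately show False by linarith
  qed
  have cont: "\<And>t. t > 0 \<Longrightarrow> isCont (\<lambda>t. 1 / R1 t) t"
  proof -
    fix t :: real assume t: "t > 0"
    have "isCont R1 t" using dd[OF t] by (blast intro: DERIV_isCont)
    then show "isCont (\<lambda>t. 1 / R1 t) t" using R0[OF t] by (intro continuous_intros)
  qed
  have gd: "\<And>x. x > 0 \<Longrightarrow> ((\<lambda>x. 2 * \<gamma> x) has_real_derivative 2 / R1 x) (at x)"
  proof -
    fix x :: real assume "x > 0"
    have "(\<gamma> has_real_derivative 1 / R1 x) (at x)"
      unfolding \<gamma>_def using gamma_deriv[OF c_pos \<open>x > 0\<close> cont] by simp
    then have "((\<lambda>x. 2 * \<gamma> x) has_real_derivative 2 * (1 / R1 x)) (at x)"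
      by (rule DERIV_cmult)
    then show "((\<lambda>x. 2 * \<gamma> x) has_real_derivative 2 / R1 x) (at x)" by simp
  qed
  have S2: "appell_sol q lam P2 Q2 R2"
    unfolding appell_sol_def
  proof (intro allI impI)
    fix x :: real assume x: "x > 0"
    note dx = dd[OF x]
    note r = rot_deriv[where P=P1 and Q=Q1 and R=R1 and g="\<lambda>x. 2 * \<gamma> x" and m="lam - q x" and x=x,
      OF dx[THEN conjunct1] dx[THEN conjunct2, THEN conjunct1] dx[THEN conjunct2, THEN conjunct2]
         gd[OF x] R0[OF x] inv[OF x]]
    show "(P2 has_real_derivative ((lam - q x) * Q2 x)) (at x) \<and>
            (Q2 has_real_derivative (- 2 * P2 x + 2 * (lam - q x) * R2 x)) (at x) \<and>
            (R2 has_real_derivative (- Q2 x)) (at x)"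
      unfolding P2_def Q2_def R2_def using r by simp
  qed
  have S3: "appell_sol q lam P3 Q3 R3"
    unfolding appell_sol_def
  proof (intro allI impI)
    fix x :: real assume x: "x > 0"
    note dx = dd[OF x]
    note r = rot_deriv_sin[where P=P1 and Q=Q1 and R=R1 and g="\<lambda>x. 2 * \<gamma> x" and m="lam - q x" and x=x,
      OF dx[THEN conjunct1] dx[THEN conjunct2, THEN conjunct1] dx[THEN conjunct2, THEN conjunct2]
         gd[OF x] R0[OF x] inv[OF x]]
    show "(P3 has_real_derivative ((lam - q x) * Q3 x)) (at x) \<and>
            (Q3 has_real_derivative (- 2 * P3 x + 2 * (lam - q x) * R3 x)) (at x) \<and>
            (R3 has_real_derivative (- Q3 x)) (at x)"
      unfolding P3_def Q3_def R3_def using r by simp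
  qed
  have gen: "\<exists>b1 b2 b3. \<forall>x>0.
               P x = b1 * P1 x + b2 * P2 x + b3 * P3 x \<and>
               Q x = b1 * Q1 x + b2 * Q2 x + b3 * Q3 x \<and>
               R x = b1 * R1 x + b2 * R2 x + b3 * R3 x" if U: "appell_sol q lam P Q R" for P Q R
  proof -
    define K where "K = (\<lambda>P' Q' R' x. 2 * (P x * R' x + R x * P' x) - Q x * Q' x)"
    have Kc: "\<And>P' Q' R' x. appell_sol q lam P' Q' R' \<Longrightarrow> x > 0 \<Longrightarrow> K P' Q' R' x = K P' Q' R' 1"
      unfolding K_def by (rule const_pos) (rule bil_deriv[OF U], auto)
    show ?thesis
    proof (intro exI allI impI)
      fix x :: real assume x: "x > 0"
      note D = decomp[OF R0[OF x] inv[OF x] sin_cos_squared_add2[of "2 * \<gamma> x"], where p="P x" and q="Q x" and r="R x"]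
      have E1: "K P1 Q1 R1 1 = K P1 Q1 R1 x" using Kc[OF U1_sol x] by simp
      have E2: "K P2 Q2 R2 1 = K P2 Q2 R2 x" using Kc[OF S2 x] by simp
      have E3: "K P3 Q3 R3 1 = K P3 Q3 R3 x" using Kc[OF S3 x] by simp
      show "P x = K P1 Q1 R1 1 / 4 * P1 x + (- K P2 Q2 R2 1 / 4) * P2 x + (- K P3 Q3 R3 1 / 4) * P3 x \<and>
            Q x = K P1 Q1 R1 1 / 4 * Q1 x + (- K P2 Q2 R2 1 / 4) * Q2 x + (- K P3 Q3 R3 1 / 4) * Q3 x \<and>
            R x = K P1 Q1 R1 1 / 4 * R1 x + (- K P2 Q2 R2 1 / 4) * R2 x + (- K P3 Q3 R3 1 / 4) * R3 x"
        unfolding E1 E2 E3 unfolding K_def P2_def Q2_def R2_def P3_def Q3_def R3_def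
        using D by blast
    qed
  qed
  show ?thesis using S2 S3 gen by blast
qed

end
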